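(* Let $(X,d_X)$ be a discrete countable metric space and $A\subset X$ nonempty such that $X\setminus N_k(A)\neq\emptyset$ for every $k\in\mathbb N$. Then $M_{X,d^A}$ is a submodule of the Hilbert $C^*_u(X)$-module $C^*_u(X)$ (with inner product $\langle S,T\rangle=S^*T$) which is not orthogonally complemented; more precisely, $M_{X,d^A}\ne C^*_u(X)$ while its orthogonal complement in $C^*_u(X)$ is $\{0\}$.
   Context: $H_X=\ell^2(X)$, $C^*_u(X)$ is the norm closure in $\mathbb B(H_X)$ of bounded finite-propagation operators (propagation at most $L$ means $(\delta_x,T\delta_y)=0$ whenever $d_X(x,y)\ge L$). $N_k(A)=\{x\in X:d_X(x,A)\le k\}$. With $X_0,X_1$ two copies of $X$ ($x\in X$ denoted $x_i$ in $X_i$), $d^A$ is the metric on $X_0\sqcup X_1$ given by $d^A(x_i,y_i)=d_X(x,y)$, $i=0,1$, and $d^A(x_0,y_1)=\inf_{z\in A}[d_X(x,z)+d_X(y,z)+1]$. $M_{X,d^A}$ is the norm closure of the bounded operators $T:H_{X_0}\to H_{X_1}$ of finite propagation with respect to $d^A$ (there is $L$ with $(\delta_{y_1},T\delta_{x_0})=0$ whenever $d^A(x_0,y_1)\ge L$), regarded as a subset of $\mathbb B(H_X)$ via the identification $H_{X_0}=H_{X_1}=H_X$. *)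

theory Defs
  imports "HOL-Analysis.Analysis"
begin

text \<open>Vectors of H_X = l^2(X), for X a subset of the type 'a: functions vanishing off X,
  square summable.  Operators are maps on such functions, normalised to vanish off l^2(X).\<close>

definition ell2 :: "'a set \<Rightarrow> ('a \<Rightarrow> complex) set" where
  "ell2 X = {f. (\<forall>x. x \<notin> X \<longrightarrow> f x = 0) \<and> (\<lambda>x. (cmod (f x))\<^sup>2) summable_on X}"

definition ell2_norm :: "('a \<Rightarrow> complex) \<Rightarrow> real" where
  "ell2_norm f = sqrt (\<Sum>\<^sub>\<infinity>x. (cmod (f x))\<^sup>2)"

definition ell2_inner :: "('a \<Rightarrow> complex) \<Rightarrow> ('a \<Rightarrow> complex) \<Rightarrow> complex" where
  "ell2_inner f g = (\<Sum>\<^sub>\<infinity>x. cnj (f x) * g x)"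

definition delta :: "'a \<Rightarrow> 'a \<Rightarrow> complex" where
  "delta y = (\<lambda>z. if z = y then 1 else 0)"

type_synonym 'a op = "('a \<Rightarrow> complex) \<Rightarrow> ('a \<Rightarrow> complex)"

definition bounded_op :: "'a set \<Rightarrow> 'a op \<Rightarrow> bool" where
  "bounded_op X T \<longleftrightarrow>
     (\<forall>f. f \<notin> ell2 X \<longrightarrow> T f = (\<lambda>x. 0)) \<and>
     (\<forall>f \<in> ell2 X. T f \<in> ell2 X) \<and>
     (\<forall>f \<in> ell2 X. \<forall>g \<in> ell2 X. T (\<lambda>x. f x + g x) = (\<lambda>x. T f x + T g x)) \<and>
     (\<forall>c. \<forall>f \<in> ell2 X. T (\<lambda>x. c * f x) = (\<lambda>x. c * T f x)) \<and>
     (\<exists>C. \<forall>f \<in> ell2 X. ell2_norm (T f) \<le> C * ell2_norm f)"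

definition zero_op :: "'a op" where
  "zero_op = (\<lambda>f x. 0)"

definition op_close :: "'a set \<Rightarrow> 'a op \<Rightarrow> 'a op \<Rightarrow> real \<Rightarrow> bool" where
  "op_close X T S e \<longleftrightarrow> (\<forall>f \<in> ell2 X. ell2_norm (\<lambda>x. T f x - S f x) \<le> e * ell2_norm f)"

definition op_closure :: "'a set \<Rightarrow> 'a op set \<Rightarrow> 'a op set" where
  "op_closure X S = {T. bounded_op X T \<and> (\<forall>e>0. \<exists>S'\<in>S. op_close X T S' e)}"

definition adjoint :: "'a set \<Rightarrow> 'a op \<Rightarrow> 'a op" where
  "adjoint X T = (THE S. bounded_op X S \<and>
      (\<forall>f \<in> ell2 X. \<forall>g \<in> ell2 X. ell2_inner (T f) g = ell2_inner f (S g)))"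

definition finite_prop :: "'a set \<Rightarrow> ('a \<Rightarrow> 'a \<Rightarrow> real) \<Rightarrow> 'a op \<Rightarrow> bool" where
  "finite_prop X D T \<longleftrightarrow> (\<exists>L. \<forall>x\<in>X. \<forall>y\<in>X. D y x \<ge> L \<longrightarrow> T (delta y) x = 0)"

definition uniform_roe :: "'a set \<Rightarrow> ('a \<Rightarrow> 'a \<Rightarrow> real) \<Rightarrow> 'a op set" where
  "uniform_roe X d = op_closure X {T. bounded_op X T \<and> finite_prop X d T}"

definition dA :: "('a \<Rightarrow> 'a \<Rightarrow> real) \<Rightarrow> 'a set \<Rightarrow> 'a \<Rightarrow> 'a \<Rightarrow> real" where
  "dA d A x y = Inf ((\<lambda>z. d x z + d y z + 1) ` A)"

text \<open>M_{X,d^A}: operators H_{X_0} \<rightarrow> H_{X_1} (identified with operators on H_X)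
  of finite propagation w.r.t. d^A, i.e. (delta_{y_1}, T delta_{x_0}) = 0 when d^A(x_0,y_1) >= L.\<close>
definition M_space :: "'a set \<Rightarrow> ('a \<Rightarrow> 'a \<Rightarrow> real) \<Rightarrow> 'a set \<Rightarrow> 'a op set" where
  "M_space X d A = op_closure X {T. bounded_op X T \<and> finite_prop X (dA d A) T}"

definition setdist :: "('a \<Rightarrow> 'a \<Rightarrow> real) \<Rightarrow> 'a \<Rightarrow> 'a set \<Rightarrow> real" where
  "setdist d x A = Inf (d x ` A)"

definition nbhd :: "'a set \<Rightarrow> ('a \<Rightarrow> 'a \<Rightarrow> real) \<Rightarrow> real \<Rightarrow> 'a set \<Rightarrow> 'a set" where
  "nbhd X d k A = {x \<in> X. setdist d x A \<le> k}"

definition discrete_metric :: "'a set \<Rightarrow> ('a \<Rightarrow> 'a \<Rightarrow> real) \<Rightarrow> bool" where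
  "discrete_metric X d \<longleftrightarrow> (\<forall>x\<in>X. \<exists>e>0. \<forall>y\<in>X. d x y < e \<longrightarrow> y = x)"

end

theory Submission
  imports Defs
begin


definition N2 :: "('a \<Rightarrow> complex) \<Rightarrow> real" where
  "N2 f = (\<Sum>\<^sub>\<infinity>x. (cmod (f x))\<^sup>2)"

lemma ell2_norm_N2: "ell2_norm f = sqrt (N2 f)"
  by (simp add: ell2_norm_def N2_def)

lemma ell2_iff: "f \<in> ell2 X \<longleftrightarrow> (\<forall>x. x \<notin> X \<longrightarrow> f x = 0) \<and> (\<lambda>x. (cmod (f x))\<^sup>2) summable_on UNIV"
proof -
  have "(\<forall>x. x \<notin> X \<longrightarrow> f x = 0) \<Longrightarrow>
     ((\<lambda>x. (cmod (f x))\<^sup>2) summable_on X \<longleftrightarrow> (\<lambda>x. (cmod (f x))\<^sup>2) summable_on UNIV)"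
    by (rule summable_on_cong_neutral) auto
  thus ?thesis unfolding ell2_def by auto
qed

lemma ell2_summ: "f \<in> ell2 X \<Longrightarrow> (\<lambda>x. (cmod (f x))\<^sup>2) summable_on UNIV"
  by (simp add: ell2_iff)

lemma ell2_van: "f \<in> ell2 X \<Longrightarrow> x \<notin> X \<Longrightarrow> f x = 0"
  by (simp add: ell2_iff)

lemma N2_nonneg: "0 \<le> N2 f"
  unfolding N2_def by (rule infsum_nonneg) simp

lemma norm_nonneg2: "0 \<le> ell2_norm f"
  by (simp add: ell2_norm_N2 N2_nonneg)

lemma fin_le_N2: "f \<in> ell2 X \<Longrightarrow> finite F \<Longrightarrow> (\<Sum>x\<in>F. (cmod (f x))\<^sup>2) \<le> N2 f"
  unfolding N2_def by (rule finite_sum_le_infsum) (auto intro: ell2_summ)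

lemma N2_fin: "finite F \<Longrightarrow> (\<And>x. x \<notin> F \<Longrightarrow> f x = 0) \<Longrightarrow> N2 f = (\<Sum>x\<in>F. (cmod (f x))\<^sup>2)"
proof -
  assume F: "finite F" and z: "\<And>x. x \<notin> F \<Longrightarrow> f x = 0"
  have "N2 f = (\<Sum>\<^sub>\<infinity>x\<in>F. (cmod (f x))\<^sup>2)"
    unfolding N2_def by (rule infsum_cong_neutral) (auto simp: z)
  thus ?thesis using F by simp
qed

lemma ell2_fin: assumes F: "finite F" "F \<subseteq> X" and z: "\<And>x. x \<notin> F \<Longrightarrow> f x = 0"
  shows "f \<in> ell2 X"
proof -
  have "finite {x \<in> UNIV. (cmod (f x))\<^sup>2 \<noteq> 0}"
    by (rule rev_finite_subset[OF F(1)]) (use z in auto)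
  thus ?thesis using F z unfolding ell2_iff by (auto intro!: finite_nonzero_values_imp_summable_on)
qed

lemma delta_ell2: "y \<in> X \<Longrightarrow> delta y \<in> ell2 X"
  by (rule ell2_fin[of "{y}"]) (auto simp: delta_def)

lemma N2_delta: "N2 (delta y) = 1"
  by (subst N2_fin[of "{y}"]) (auto simp: delta_def)

lemma norm_delta: "ell2_norm (delta y) = 1"
  by (simp add: ell2_norm_N2 N2_delta)

lemma zero_ell2: "(\<lambda>x. 0) \<in> ell2 X"
  by (rule ell2_fin[of "{}"]) auto

lemma norm_zero2: "ell2_norm (\<lambda>x. 0) = 0"
  by (simp add: ell2_norm_N2 N2_def)

lemma scal_ell2: "f \<in> ell2 X \<Longrightarrow> (\<lambda>x. c * f x) \<in> ell2 X"
  unfolding ell2_iff by (auto simp: norm_mult power_mult_distrib intro: summable_on_cmult_right)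

lemma norm_scal: "ell2_norm (\<lambda>x. c * f x) = cmod c * ell2_norm f"
  by (simp add: ell2_norm_N2 N2_def norm_mult power_mult_distrib infsum_cmult_right' real_sqrt_mult)

lemma ptwise: "f \<in> ell2 X \<Longrightarrow> cmod (f x) \<le> ell2_norm f"
proof -
  assume f: "f \<in> ell2 X"
  have "(\<Sum>y\<in>{x}. (cmod (f y))\<^sup>2) \<le> N2 f" by (rule fin_le_N2[OF f]) auto
  hence "(cmod (f x))\<^sup>2 \<le> N2 f" by simp
  thus ?thesis unfolding ell2_norm_N2 using real_le_rsqrt by blast
qed

lemma L2_le_norm: "f \<in> ell2 X \<Longrightarrow> L2_set (\<lambda>x. cmod (f x)) F \<le> ell2_norm f"
proof (cases "finite F")
  case True
  assume f: "f \<in> ell2 X"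
  show ?thesis unfolding L2_set_def ell2_norm_N2
    using fin_le_N2[OF f True] by (simp add: real_sqrt_le_mono)
next
  case False thus ?thesis by (simp add: norm_nonneg2)
qed

lemma add_ell2: "f \<in> ell2 X \<Longrightarrow> g \<in> ell2 X \<Longrightarrow> (\<lambda>x. f x + g x) \<in> ell2 X"
proof -
  assume f: "f \<in> ell2 X" and g: "g \<in> ell2 X"
  have s: "(\<lambda>x. 2 * (cmod (f x))\<^sup>2 + 2 * (cmod (g x))\<^sup>2) summable_on UNIV"
    using f g by (intro summable_on_add summable_on_cmult_right ell2_summ)
  have le: "(cmod (f x + g x))\<^sup>2 \<le> 2 * (cmod (f x))\<^sup>2 + 2 * (cmod (g x))\<^sup>2" for x
  proof -
    have "(cmod (f x + g x))\<^sup>2 \<le> (cmod (f x) + cmod (g x))\<^sup>2"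
      by (intro power_mono norm_triangle_ineq) simp
    also have "\<dots> \<le> 2 * (cmod (f x))\<^sup>2 + 2 * (cmod (g x))\<^sup>2"
      using sum_squares_bound[of "cmod (f x)" "cmod (g x)"] by (simp add: power2_sum)
    finally show ?thesis .
  qed
  show ?thesis unfolding ell2_iff
    using ell2_van[OF f] ell2_van[OF g]
    by (auto intro!: summable_on_comparison_test[OF s] le)
qed

lemma triangle2: "f \<in> ell2 X \<Longrightarrow> g \<in> ell2 X \<Longrightarrow> ell2_norm (\<lambda>x. f x + g x) \<le> ell2_norm f + ell2_norm g"
proof -
  assume f: "f \<in> ell2 X" and g: "g \<in> ell2 X"
  have fg: "(\<lambda>x. f x + g x) \<in> ell2 X" using add_ell2[OF f g] .
  have "N2 (\<lambda>x. f x + g x) \<le> (ell2_norm f + ell2_norm g)\<^sup>2"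
    unfolding N2_def
  proof (rule infsum_le_finite_sums[OF ell2_summ[OF fg]])
    fix F :: "'a set" assume F: "finite F"
    have "(\<Sum>x\<in>F. (cmod (f x + g x))\<^sup>2) = (L2_set (\<lambda>x. cmod (f x + g x)) F)\<^sup>2"
      unfolding L2_set_def by (simp add: sum_nonneg)
    also have "\<dots> \<le> (L2_set (\<lambda>x. cmod (f x)) F + L2_set (\<lambda>x. cmod (g x)) F)\<^sup>2"
    proof (rule power_mono)
      have "L2_set (\<lambda>x. cmod (f x + g x)) F \<le> L2_set (\<lambda>x. cmod (f x) + cmod (g x)) F"
        by (rule L2_set_mono) (auto simp: norm_triangle_ineq)
      also have "\<dots> \<le> L2_set (\<lambda>x. cmod (f x)) F + L2_set (\<lambda>x. cmod (g x)) F"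
        by (rule L2_set_triangle_ineq)
      finally show "L2_set (\<lambda>x. cmod (f x + g x)) F \<le> \<dots>" .
    qed simp
    also have "\<dots> \<le> (ell2_norm f + ell2_norm g)\<^sup>2"
      by (intro power_mono add_mono L2_le_norm[OF f] L2_le_norm[OF g]) simp
    finally show "(\<Sum>x\<in>F. (cmod (f x + g x))\<^sup>2) \<le> (ell2_norm f + ell2_norm g)\<^sup>2" .
  qed
  hence "sqrt (N2 (\<lambda>x. f x + g x)) \<le> sqrt ((ell2_norm f + ell2_norm g)\<^sup>2)"
    by (rule real_sqrt_le_mono)
  thus ?thesis by (simp add: ell2_norm_N2 N2_nonneg)
qed

lemma diff_ell2: "f \<in> ell2 X \<Longrightarrow> g \<in> ell2 X \<Longrightarrow> (\<lambda>x. f x - g x) \<in> ell2 X"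
  using add_ell2[OF _ scal_ell2[of g X "-1"], of f] by simp

lemma triangle_diff: "f \<in> ell2 X \<Longrightarrow> g \<in> ell2 X \<Longrightarrow> h \<in> ell2 X \<Longrightarrow>
   ell2_norm (\<lambda>x. f x - h x) \<le> ell2_norm (\<lambda>x. f x - g x) + ell2_norm (\<lambda>x. g x - h x)"
  using triangle2[OF diff_ell2[of f X g] diff_ell2[of g X h]] by simp

lemma prod_abs_summ: "f \<in> ell2 X \<Longrightarrow> g \<in> ell2 X \<Longrightarrow> (\<lambda>x. norm (cnj (f x) * g x)) summable_on UNIV"
proof -
  assume f: "f \<in> ell2 X" and g: "g \<in> ell2 X"
  have s: "(\<lambda>x. (cmod (f x))\<^sup>2 + (cmod (g x))\<^sup>2) summable_on UNIV"
    using f g by (intro summable_on_add ell2_summ)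
  have le: "cmod (cnj (f x) * g x) \<le> (cmod (f x))\<^sup>2 + (cmod (g x))\<^sup>2" for x
  proof -
    have "0 \<le> cmod (f x) * cmod (g x)" by simp
    moreover have "cmod (cnj (f x) * g x) = cmod (f x) * cmod (g x)" by (simp add: norm_mult)
    ultimately show ?thesis using sum_squares_bound[of "cmod (f x)" "cmod (g x)"] by linarith
  qed
  show ?thesis by (rule summable_on_comparison_test[OF s]) (auto simp: le)
qed

lemma prod_summ: "f \<in> ell2 X \<Longrightarrow> g \<in> ell2 X \<Longrightarrow> (\<lambda>x. cnj (f x) * g x) summable_on UNIV"
  by (rule abs_summable_summable[OF prod_abs_summ])

lemma CS: "f \<in> ell2 X \<Longrightarrow> g \<in> ell2 X \<Longrightarrow> cmod (ell2_inner f g) \<le> ell2_norm f * ell2_norm g"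
proof -
  assume f: "f \<in> ell2 X" and g: "g \<in> ell2 X"
  have "cmod (ell2_inner f g) \<le> (\<Sum>\<^sub>\<infinity>x. cmod (cnj (f x) * g x))"
    unfolding ell2_inner_def by (rule norm_infsum_bound[OF prod_abs_summ[OF f g]])
  also have "\<dots> \<le> ell2_norm f * ell2_norm g"
  proof (rule infsum_le_finite_sums[OF prod_abs_summ[OF f g]])
    fix F :: "'a set" assume "finite F"
    have "(\<Sum>x\<in>F. cmod (cnj (f x) * g x)) = (\<Sum>x\<in>F. \<bar>cmod (f x)\<bar> * \<bar>cmod (g x)\<bar>)"
      by (simp add: norm_mult)
    also have "\<dots> \<le> L2_set (\<lambda>x. cmod (f x)) F * L2_set (\<lambda>x. cmod (g x)) F"
      by (rule L2_set_mult_ineq)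
    also have "\<dots> \<le> ell2_norm f * ell2_norm g"
      by (intro mult_mono L2_le_norm[OF f] L2_le_norm[OF g]) (auto simp: norm_nonneg2)
    finally show "(\<Sum>x\<in>F. cmod (cnj (f x) * g x)) \<le> ell2_norm f * ell2_norm g" .
  qed
  finally show ?thesis .
qed

lemma inner_add_left: assumes f: "f \<in> ell2 X" and h: "h \<in> ell2 X" and g: "g \<in> ell2 X"
  shows "ell2_inner (\<lambda>x. f x + h x) g = ell2_inner f g + ell2_inner h g"
proof -
  have "(\<lambda>x. cnj (f x + h x) * g x) = (\<lambda>x. cnj (f x) * g x + cnj (h x) * g x)"
    by (auto simp: algebra_simps)
  thus ?thesis unfolding ell2_inner_def
    using infsum_add[OF prod_summ[OF f g] prod_summ[OF h g]] by simp
qed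

lemma inner_add_right: assumes f: "f \<in> ell2 X" and h: "h \<in> ell2 X" and g: "g \<in> ell2 X"
  shows "ell2_inner g (\<lambda>x. f x + h x) = ell2_inner g f + ell2_inner g h"
proof -
  have "(\<lambda>x. cnj (g x) * (f x + h x)) = (\<lambda>x. cnj (g x) * f x + cnj (g x) * h x)"
    by (auto simp: algebra_simps)
  thus ?thesis unfolding ell2_inner_def
    using infsum_add[OF prod_summ[OF g f] prod_summ[OF g h]] by simp
qed

lemma inner_scal_left: "ell2_inner (\<lambda>x. c * f x) g = cnj c * ell2_inner f g"
  unfolding ell2_inner_def by (simp add: mult.assoc infsum_cmult_right')

lemma inner_scal_right: "ell2_inner g (\<lambda>x. c * f x) = c * ell2_inner g f"
  unfolding ell2_inner_def by (simp add: mult.left_commute infsum_cmult_right')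

lemma inner_fin_left: "finite F \<Longrightarrow> (\<And>x. x \<notin> F \<Longrightarrow> f x = 0) \<Longrightarrow>
   ell2_inner f k = (\<Sum>x\<in>F. cnj (f x) * k x)"
proof -
  assume F: "finite F" and z: "\<And>x. x \<notin> F \<Longrightarrow> f x = 0"
  have "ell2_inner f k = (\<Sum>\<^sub>\<infinity>x\<in>F. cnj (f x) * k x)"
    unfolding ell2_inner_def by (rule infsum_cong_neutral) (auto simp: z)
  thus ?thesis using F by simp
qed

lemma inner_delta_left: "ell2_inner (delta y) k = k y"
  by (subst inner_fin_left[of "{y}"]) (auto simp: delta_def)

lemma inner_delta_right: "ell2_inner k (delta y) = cnj (k y)"
proof -
  have "ell2_inner k (delta y) = (\<Sum>\<^sub>\<infinity>x\<in>{y}. cnj (k x) * delta y x)"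
    unfolding ell2_inner_def by (rule infsum_cong_neutral) (auto simp: delta_def)
  thus ?thesis by (simp add: delta_def)
qed



lemma bop_van: "bounded_op X T \<Longrightarrow> f \<notin> ell2 X \<Longrightarrow> T f = (\<lambda>x. 0)"
  unfolding bounded_op_def by blast
lemma bop_ell2: "bounded_op X T \<Longrightarrow> f \<in> ell2 X \<Longrightarrow> T f \<in> ell2 X"
  unfolding bounded_op_def by blast
lemma bop_add: "bounded_op X T \<Longrightarrow> f \<in> ell2 X \<Longrightarrow> g \<in> ell2 X \<Longrightarrow> T (\<lambda>x. f x + g x) = (\<lambda>x. T f x + T g x)"
  unfolding bounded_op_def by blast
lemma bop_scal: "bounded_op X T \<Longrightarrow> f \<in> ell2 X \<Longrightarrow> T (\<lambda>x. c * f x) = (\<lambda>x. c * T f x)"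
  unfolding bounded_op_def by blast
lemma bop_bound: "bounded_op X T \<Longrightarrow> \<exists>C\<ge>0. \<forall>f\<in>ell2 X. ell2_norm (T f) \<le> C * ell2_norm f"
proof -
  assume "bounded_op X T"
  then obtain C where C: "\<forall>f\<in>ell2 X. ell2_norm (T f) \<le> C * ell2_norm f"
    unfolding bounded_op_def by blast
  have "\<forall>f\<in>ell2 X. ell2_norm (T f) \<le> max C 0 * ell2_norm f"
  proof
    fix f assume "f \<in> ell2 X"
    hence "ell2_norm (T f) \<le> C * ell2_norm f" using C by blast
    also have "\<dots> \<le> max C 0 * ell2_norm f" by (rule mult_right_mono) (auto simp: norm_nonneg2)
    finally show "ell2_norm (T f) \<le> max C 0 * ell2_norm f" .
  qed
  thus ?thesis by (intro exI[of _ "max C 0"]) auto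
qed

lemma bop_zero: "bounded_op X T \<Longrightarrow> T (\<lambda>x. 0) = (\<lambda>x. 0)"
  using bop_scal[OF _ zero_ell2, of X T 0] by simp

lemma bop_diff: "bounded_op X T \<Longrightarrow> f \<in> ell2 X \<Longrightarrow> g \<in> ell2 X \<Longrightarrow> T (\<lambda>x. f x - g x) = (\<lambda>x. T f x - T g x)"
proof -
  assume T: "bounded_op X T" and f: "f \<in> ell2 X" and g: "g \<in> ell2 X"
  have "T (\<lambda>x. f x + (-1) * g x) = (\<lambda>x. T f x + T (\<lambda>x. (-1) * g x) x)"
    by (rule bop_add[OF T f scal_ell2[OF g]])
  also have "T (\<lambda>x. (-1) * g x) = (\<lambda>x. (-1) * T g x)" by (rule bop_scal[OF T g])
  finally show ?thesis by simp
qed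

lemma sum_ell2: "finite F \<Longrightarrow> (\<forall>y\<in>F. h y \<in> ell2 X) \<Longrightarrow> (\<lambda>x. \<Sum>y\<in>F. c y * h y x) \<in> ell2 X"
proof (induction F rule: finite_induct)
  case empty thus ?case by (simp add: zero_ell2)
next
  case (insert a F)
  have "(\<lambda>x. c a * h a x + (\<Sum>y\<in>F. c y * h y x)) \<in> ell2 X"
    using insert by (intro add_ell2 scal_ell2) auto
  thus ?case using insert by simp
qed

lemma bop_sum: assumes T: "bounded_op X T" shows "finite F \<Longrightarrow> (\<forall>y\<in>F. h y \<in> ell2 X) \<Longrightarrow>
   T (\<lambda>x. \<Sum>y\<in>F. c y * h y x) = (\<lambda>x. \<Sum>y\<in>F. c y * T (h y) x)"
proof (induction F rule: finite_induct)
  case empty thus ?case by (simp add: bop_zero[OF T])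
next
  case (insert a F)
  have s: "(\<lambda>x. \<Sum>y\<in>F. c y * h y x) \<in> ell2 X" using insert by (intro sum_ell2) auto
  have "T (\<lambda>x. c a * h a x + (\<Sum>y\<in>F. c y * h y x)) =
      (\<lambda>x. T (\<lambda>x. c a * h a x) x + T (\<lambda>x. \<Sum>y\<in>F. c y * h y x) x)"
    using insert s by (intro bop_add[OF T] scal_ell2) auto
  also have "T (\<lambda>x. c a * h a x) = (\<lambda>x. c a * T (h a) x)" using insert by (intro bop_scal[OF T]) auto
  finally show ?case using insert by simp
qed

lemma restr_sum: "finite F \<Longrightarrow> (\<lambda>x. if x \<in> F then f x else 0) = (\<lambda>x. \<Sum>y\<in>F. f y * delta y x)"
  by (auto simp: delta_def if_distrib cong: if_cong)

lemma inner_sum_left: "finite F \<Longrightarrow> (\<forall>y\<in>F. h y \<in> ell2 X) \<Longrightarrow> g \<in> ell2 X \<Longrightarrow>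
   ell2_inner (\<lambda>x. \<Sum>y\<in>F. c y * h y x) g = (\<Sum>y\<in>F. cnj (c y) * ell2_inner (h y) g)"
proof (induction F rule: finite_induct)
  case empty thus ?case by (simp add: ell2_inner_def)
next
  case (insert a F)
  have s: "(\<lambda>x. \<Sum>y\<in>F. c y * h y x) \<in> ell2 X" using insert by (intro sum_ell2) auto
  have "ell2_inner (\<lambda>x. c a * h a x + (\<Sum>y\<in>F. c y * h y x)) g =
     ell2_inner (\<lambda>x. c a * h a x) g + ell2_inner (\<lambda>x. \<Sum>y\<in>F. c y * h y x) g"
    using insert s by (intro inner_add_left scal_ell2) auto
  thus ?case using insert by (simp add: inner_scal_left)
qed

lemma tail: assumes f: "f \<in> ell2 X" and e: "e > 0"
  shows "\<exists>F. finite F \<and> F \<subseteq> X \<and> ell2_norm (\<lambda>x. f x - (if x \<in> F then f x else 0)) \<le> e"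
proof -
  let ?q = "\<lambda>x. (cmod (f x))\<^sup>2"
  have sX: "?q summable_on X" using f unfolding ell2_def by auto
  have e2: "e\<^sup>2 > 0" using e by simp
  obtain F where F: "finite F" "F \<subseteq> X" "dist (sum ?q F) (infsum ?q X) \<le> e\<^sup>2"
    using infsum_finite_approximation[OF sX e2] by auto
  have eq: "infsum ?q X = N2 f" unfolding N2_def
    by (rule infsum_cong_neutral) (use ell2_van[OF f] in auto)
  define r where "r = (\<lambda>x. if x \<in> F then f x else 0)"
  define t where "t = (\<lambda>x. f x - r x)"
  have r: "r \<in> ell2 X" by (rule ell2_fin[OF F(1,2)]) (auto simp: r_def)
  have t: "t \<in> ell2 X" using diff_ell2[OF f r] by (simp add: t_def)
  have qq: "(\<lambda>x. (cmod (f x))\<^sup>2) = (\<lambda>x. (cmod (t x))\<^sup>2 + (cmod (r x))\<^sup>2)"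
    by (auto simp: t_def r_def)
  have "N2 f = N2 t + N2 r"
    unfolding N2_def qq by (rule infsum_add[OF ell2_summ[OF t] ell2_summ[OF r]])
  moreover have "N2 r = sum ?q F" by (subst N2_fin[OF F(1)]) (auto simp: r_def)
  ultimately have "N2 t \<le> e\<^sup>2" using F(3) eq by (simp add: dist_real_def)
  hence "sqrt (N2 t) \<le> sqrt (e\<^sup>2)" by (rule real_sqrt_le_mono)
  hence "ell2_norm t \<le> e" using e by (simp add: ell2_norm_N2)
  thus ?thesis using F by (intro exI[of _ F]) (simp add: t_def r_def)
qed

lemma density:
  assumes f: "f \<in> ell2 X"
  and add: "\<And>g h. g \<in> ell2 X \<Longrightarrow> h \<in> ell2 X \<Longrightarrow> \<phi> (\<lambda>x. g x + h x) = \<phi> g + \<phi> h"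
  and bnd: "\<And>h. h \<in> ell2 X \<Longrightarrow> cmod (\<phi> h) \<le> K * ell2_norm h"
  and fin: "\<And>F. finite F \<Longrightarrow> F \<subseteq> X \<Longrightarrow> \<phi> (\<lambda>x. if x \<in> F then f x else 0) = 0"
  shows "\<phi> f = 0"
proof -
  define K' where "K' = max K 0"
  have K': "K' \<ge> 0" by (simp add: K'_def)
  have bnd': "cmod (\<phi> h) \<le> K' * ell2_norm h" if "h \<in> ell2 X" for h
  proof -
    have "cmod (\<phi> h) \<le> K * ell2_norm h" using bnd[OF that] .
    also have "\<dots> \<le> K' * ell2_norm h" by (rule mult_right_mono) (auto simp: K'_def norm_nonneg2)
    finally show ?thesis .
  qed
  have le: "cmod (\<phi> f) \<le> K' * e" if e: "e > 0" for e
  proof -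
    obtain F where F: "finite F" "F \<subseteq> X" "ell2_norm (\<lambda>x. f x - (if x \<in> F then f x else 0)) \<le> e"
      using tail[OF f e] by blast
    define r where "r = (\<lambda>x. if x \<in> F then f x else 0)"
    define t where "t = (\<lambda>x. f x - r x)"
    have r: "r \<in> ell2 X" by (rule ell2_fin[OF F(1,2)]) (auto simp: r_def)
    have t: "t \<in> ell2 X" using diff_ell2[OF f r] by (simp add: t_def)
    have "f = (\<lambda>x. t x + r x)" by (auto simp: t_def)
    hence "\<phi> f = \<phi> t + \<phi> r" using add[OF t r] by simp
    also have "\<phi> r = 0" unfolding r_def by (rule fin[OF F(1,2)])
    finally have "cmod (\<phi> f) = cmod (\<phi> t)" by simp
    also have "\<dots> \<le> K' * ell2_norm t" by (rule bnd'[OF t])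
    also have "\<dots> \<le> K' * e" using F(3) K' by (intro mult_left_mono) (auto simp: t_def r_def)
    finally show ?thesis .
  qed
  have "cmod (\<phi> f) \<le> 0"
  proof (rule field_le_epsilon)
    fix e :: real assume e: "0 < e"
    have "cmod (\<phi> f) \<le> K' * (e / (K' + 1))" using le[of "e / (K'+1)"] e K' by simp
    also have "\<dots> \<le> e" using K' e by (simp add: field_simps)
    finally show "cmod (\<phi> f) \<le> 0 + e" by simp
  qed
  thus ?thesis by simp
qed

lemma key:
  assumes T: "bounded_op X T" and g: "g \<in> ell2 X"
  and z: "\<And>y. y \<in> X \<Longrightarrow> g y \<noteq> 0 \<Longrightarrow> T (delta y) x = 0"
  shows "T g x = 0"
proof -
  obtain C where C: "C \<ge> 0" "\<forall>f\<in>ell2 X. ell2_norm (T f) \<le> C * ell2_norm f"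
    using bop_bound[OF T] by blast
  show ?thesis
  proof (rule density[where \<phi> = "\<lambda>h. T h x" and K = C, OF g])
    fix h k assume "h \<in> ell2 X" "k \<in> ell2 X"
    thus "T (\<lambda>x. h x + k x) x = T h x + T k x" using bop_add[OF T] by simp
  next
    fix h assume h: "h \<in> ell2 X"
    have "cmod (T h x) \<le> ell2_norm (T h)" by (rule ptwise[OF bop_ell2[OF T h]])
    also have "\<dots> \<le> C * ell2_norm h" using C h by blast
    finally show "cmod (T h x) \<le> C * ell2_norm h" .
  next
    fix F assume F: "finite F" "F \<subseteq> X"
    have "T (\<lambda>x. if x \<in> F then g x else 0) = T (\<lambda>x. \<Sum>y\<in>F. g y * delta y x)"
      by (simp add: restr_sum[OF F(1)])
    also have "\<dots> = (\<lambda>x. \<Sum>y\<in>F. g y * T (delta y) x)"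
      using F by (intro bop_sum[OF T]) (auto intro: delta_ell2)
    finally show "T (\<lambda>x. if x \<in> F then g x else 0) x = 0"
      using F z by (auto intro!: sum.neutral) (meson subsetD)
  qed
qed



definition adjrel :: "'a set \<Rightarrow> 'a op \<Rightarrow> 'a op \<Rightarrow> bool" where
  "adjrel X T S \<longleftrightarrow> bounded_op X S \<and>
      (\<forall>f \<in> ell2 X. \<forall>g \<in> ell2 X. ell2_inner (T f) g = ell2_inner f (S g))"

lemma adj_unique: assumes T: "bounded_op X T" and 1: "adjrel X T S1" and 2: "adjrel X T S2"
  shows "S1 = S2"
proof (rule ext)
  fix g
  have b1: "bounded_op X S1" and b2: "bounded_op X S2" using 1 2 by (auto simp: adjrel_def)
  show "S1 g = S2 g"
  proof (cases "g \<in> ell2 X")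
    case False thus ?thesis using bop_van[OF b1] bop_van[OF b2] by simp
  next
    case g: True
    show ?thesis
    proof (rule ext)
      fix y show "S1 g y = S2 g y"
      proof (cases "y \<in> X")
        case True
        have "S1 g y = ell2_inner (T (delta y)) g"
          using 1 g delta_ell2[OF True] by (simp add: adjrel_def inner_delta_left)
        also have "\<dots> = S2 g y"
          using 2 g delta_ell2[OF True] by (simp add: adjrel_def inner_delta_left)
        finally show ?thesis .
      next
        case False
        thus ?thesis using ell2_van[OF bop_ell2[OF b1 g]] ell2_van[OF bop_ell2[OF b2 g]] by simp
      qed
    qed
  qed
qed

lemma adjoint_eq: "bounded_op X T \<Longrightarrow> adjrel X T S \<Longrightarrow> adjoint X T = S"
  unfolding adjoint_def
  by (rule the_equality) (auto simp: adjrel_def[symmetric] intro: adj_unique adjrel_def[THEN iffD2])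

definition cg :: "'a set \<Rightarrow> 'a op \<Rightarrow> ('a \<Rightarrow> complex) \<Rightarrow> 'a \<Rightarrow> complex" where
  "cg X S g = (\<lambda>y. if y \<in> X then ell2_inner (S (delta y)) g else 0)"

definition adjop :: "'a set \<Rightarrow> 'a op \<Rightarrow> 'a op" where
  "adjop X S = (\<lambda>g. if g \<in> ell2 X then cg X S g else (\<lambda>x. 0))"

lemma cg_fin_bound:
  assumes S: "bounded_op X S" and C: "C \<ge> 0" "\<forall>f\<in>ell2 X. ell2_norm (S f) \<le> C * ell2_norm f"
  and g: "g \<in> ell2 X" and F: "finite F"
  shows "(\<Sum>y\<in>F. (cmod (cg X S g y))\<^sup>2) \<le> (C * ell2_norm g)\<^sup>2"
proof -
  define c where "c = cg X S g"
  define F' where "F' = F \<inter> X"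
  have F': "finite F'" "F' \<subseteq> X" using F by (auto simp: F'_def)
  have "(\<Sum>y\<in>F. (cmod (c y))\<^sup>2) = (\<Sum>y\<in>F'. (cmod (c y))\<^sup>2)"
    by (rule sum.mono_neutral_right) (use F in \<open>auto simp: F'_def c_def cg_def\<close>)
  define s where "s = (\<Sum>y\<in>F'. (cmod (c y))\<^sup>2)"
  have s0: "s \<ge> 0" by (simp add: s_def sum_nonneg)
  define h where "h = (\<lambda>x. if x \<in> F' then c x else 0)"
  have h: "h \<in> ell2 X" by (rule ell2_fin[OF F']) (auto simp: h_def)
  have hs: "h = (\<lambda>x. \<Sum>y\<in>F'. c y * delta y x)" unfolding h_def by (rule restr_sum[OF F'(1)])
  have dl: "\<forall>y\<in>F'. delta y \<in> ell2 X" using F' by (auto intro: delta_ell2)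
  have Sh: "S h = (\<lambda>x. \<Sum>y\<in>F'. c y * S (delta y) x)"
    unfolding hs by (rule bop_sum[OF S F'(1) dl])
  have "ell2_inner (S h) g = (\<Sum>y\<in>F'. cnj (c y) * ell2_inner (S (delta y)) g)"
    unfolding Sh by (rule inner_sum_left[OF F'(1) _ g]) (use dl bop_ell2[OF S] in auto)
  also have "\<dots> = (\<Sum>y\<in>F'. cnj (c y) * c y)"
    by (rule sum.cong) (use F' in \<open>auto simp: c_def cg_def\<close>)
  also have "\<dots> = of_real s"
    unfolding s_def of_real_sum by (rule sum.cong) (simp_all add: complex_norm_square mult.commute del: of_real_power)
  finally have inn: "ell2_inner (S h) g = of_real s" .
  have nh: "ell2_norm h = sqrt s"
    unfolding ell2_norm_N2 s_def by (subst N2_fin[OF F'(1)]) (auto simp: h_def)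
  have "s = cmod (ell2_inner (S h) g)" using inn s0 by simp
  also have "\<dots> \<le> ell2_norm (S h) * ell2_norm g" by (rule CS[OF bop_ell2[OF S h] g])
  also have "\<dots> \<le> C * ell2_norm h * ell2_norm g"
    using C h by (intro mult_right_mono) (auto simp: norm_nonneg2)
  finally have le: "sqrt s * sqrt s \<le> sqrt s * (C * ell2_norm g)" using s0 nh
    by (simp add: mult_ac)
  have "sqrt s \<le> C * ell2_norm g"
  proof (cases "sqrt s = 0")
    case True thus ?thesis using C by (simp add: norm_nonneg2)
  next
    case False
    hence "sqrt s > 0" using s0 by simp
    with le show ?thesis by (rule mult_left_le_imp_le)
  qed
  hence "(sqrt s)\<^sup>2 \<le> (C * ell2_norm g)\<^sup>2" using s0 by (intro power_mono) auto
  hence "s \<le> (C * ell2_norm g)\<^sup>2" using s0 by simp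
  thus ?thesis unfolding c_def[symmetric] using \<open>(\<Sum>y\<in>F. _) = _\<close> s_def by simp
qed

lemma cg_ell2:
  assumes S: "bounded_op X S" and C: "C \<ge> 0" "\<forall>f\<in>ell2 X. ell2_norm (S f) \<le> C * ell2_norm f"
  and g: "g \<in> ell2 X"
  shows "cg X S g \<in> ell2 X \<and> ell2_norm (cg X S g) \<le> C * ell2_norm g"
proof -
  have sm: "(\<lambda>y. (cmod (cg X S g y))\<^sup>2) summable_on UNIV"
  proof (rule nonneg_bdd_above_summable_on)
    show "bdd_above (sum (\<lambda>y. (cmod (cg X S g y))\<^sup>2) ` {F. F \<subseteq> UNIV \<and> finite F})"
      by (rule bdd_aboveI2[where M = "(C * ell2_norm g)\<^sup>2"]) (auto intro: cg_fin_bound[OF S C g])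
  qed simp
  have mem: "cg X S g \<in> ell2 X" unfolding ell2_iff using sm by (auto simp: cg_def)
  have "N2 (cg X S g) \<le> (C * ell2_norm g)\<^sup>2"
    unfolding N2_def by (rule infsum_le_finite_sums[OF sm]) (auto intro: cg_fin_bound[OF S C g])
  hence "sqrt (N2 (cg X S g)) \<le> sqrt ((C * ell2_norm g)\<^sup>2)" by (rule real_sqrt_le_mono)
  moreover have "sqrt ((C * ell2_norm g)\<^sup>2) = C * ell2_norm g" using C norm_nonneg2[of g] by simp
  ultimately have "ell2_norm (cg X S g) \<le> C * ell2_norm g" by (simp add: ell2_norm_N2[of "cg X S g"])
  thus ?thesis using mem by simp
qed

lemma adjop_rel: assumes S: "bounded_op X S" shows "adjrel X S (adjop X S)"
proof -
  obtain C where C: "C \<ge> 0" "\<forall>f\<in>ell2 X. ell2_norm (S f) \<le> C * ell2_norm f"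
    using bop_bound[OF S] by blast
  note cgE = cg_ell2[OF S C]
  have Sd: "y \<in> X \<Longrightarrow> S (delta y) \<in> ell2 X" for y by (rule bop_ell2[OF S delta_ell2])
  have bnd: "bounded_op X (adjop X S)"
    unfolding bounded_op_def
  proof (intro conjI ballI allI impI)
    fix f assume "f \<notin> ell2 X" thus "adjop X S f = (\<lambda>x. 0)" by (simp add: adjop_def)
  next
    fix f assume "f \<in> ell2 X" thus "adjop X S f \<in> ell2 X" using cgE by (simp add: adjop_def)
  next
    fix f g assume f: "f \<in> ell2 X" and g: "g \<in> ell2 X"
    show "adjop X S (\<lambda>x. f x + g x) = (\<lambda>x. adjop X S f x + adjop X S g x)"
      using f g add_ell2[OF f g] by (auto simp: adjop_def cg_def inner_add_right[OF f g Sd])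
  next
    fix c f assume f: "f \<in> ell2 X"
    show "adjop X S (\<lambda>x. c * f x) = (\<lambda>x. c * adjop X S f x)"
      using f scal_ell2[OF f] by (auto simp: adjop_def cg_def inner_scal_right)
  next
    show "\<exists>C. \<forall>f\<in>ell2 X. ell2_norm (adjop X S f) \<le> C * ell2_norm f"
      using cgE by (auto simp: adjop_def)
  qed
  have rel: "ell2_inner (S f) g = ell2_inner f (cg X S g)" if f: "f \<in> ell2 X" and g: "g \<in> ell2 X" for f g
  proof -
    have cgg: "cg X S g \<in> ell2 X" using cgE[OF g] by simp
    have "ell2_inner (S f) g - ell2_inner f (cg X S g) = 0"
    proof (rule density[where \<phi> = "\<lambda>h. ell2_inner (S h) g - ell2_inner h (cg X S g)"
          and K = "C * ell2_norm g + ell2_norm (cg X S g)", OF f])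
      fix h k assume h: "h \<in> ell2 X" and k: "k \<in> ell2 X"
      show "ell2_inner (S (\<lambda>x. h x + k x)) g - ell2_inner (\<lambda>x. h x + k x) (cg X S g) =
         ell2_inner (S h) g - ell2_inner h (cg X S g) + (ell2_inner (S k) g - ell2_inner k (cg X S g))"
        using bop_add[OF S h k] inner_add_left[OF bop_ell2[OF S h] bop_ell2[OF S k] g]
          inner_add_left[OF h k cgg] by simp
    next
      fix h assume h: "h \<in> ell2 X"
      have "cmod (ell2_inner (S h) g - ell2_inner h (cg X S g)) \<le>
           cmod (ell2_inner (S h) g) + cmod (ell2_inner h (cg X S g))" by (rule norm_triangle_ineq4)
      also have "\<dots> \<le> ell2_norm (S h) * ell2_norm g + ell2_norm h * ell2_norm (cg X S g)"
        by (intro add_mono CS[OF bop_ell2[OF S h] g] CS[OF h cgg])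
      also have "ell2_norm (S h) * ell2_norm g \<le> C * ell2_norm h * ell2_norm g"
        using C h by (intro mult_right_mono) (auto simp: norm_nonneg2)
      finally show "cmod (ell2_inner (S h) g - ell2_inner h (cg X S g)) \<le>
           (C * ell2_norm g + ell2_norm (cg X S g)) * ell2_norm h"
        by (simp add: algebra_simps)
    next
      fix F assume F: "finite F" "F \<subseteq> X"
      have dl: "\<forall>y\<in>F. delta y \<in> ell2 X" using F by (auto intro: delta_ell2)
      have "S (\<lambda>x. if x \<in> F then f x else 0) = S (\<lambda>x. \<Sum>y\<in>F. f y * delta y x)"
        by (simp add: restr_sum[OF F(1)])
      also have "\<dots> = (\<lambda>x. \<Sum>y\<in>F. f y * S (delta y) x)" by (rule bop_sum[OF S F(1) dl])
      finally have e1: "S (\<lambda>x. if x \<in> F then f x else 0) = \<dots>" .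
      have "ell2_inner (S (\<lambda>x. if x \<in> F then f x else 0)) g = (\<Sum>y\<in>F. cnj (f y) * ell2_inner (S (delta y)) g)"
        unfolding e1 by (rule inner_sum_left[OF F(1) _ g]) (use F Sd in auto)
      moreover have "ell2_inner (\<lambda>x. if x \<in> F then f x else 0) (cg X S g) =
          (\<Sum>x\<in>F. cnj (if x \<in> F then f x else 0) * cg X S g x)"
        by (rule inner_fin_left[OF F(1)]) auto
      moreover have "(\<Sum>x\<in>F. cnj (if x \<in> F then f x else 0) * cg X S g x) =
          (\<Sum>y\<in>F. cnj (f y) * ell2_inner (S (delta y)) g)"
        by (rule sum.cong) (use F in \<open>auto simp: cg_def\<close>)
      ultimately show "ell2_inner (S (\<lambda>x. if x \<in> F then f x else 0)) g -
          ell2_inner (\<lambda>x. if x \<in> F then f x else 0) (cg X S g) = 0" by simp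
    qed
    thus ?thesis by simp
  qed
  show ?thesis unfolding adjrel_def using bnd rel by (simp add: adjop_def)
qed

lemma adjoint_prop: "bounded_op X S \<Longrightarrow> f \<in> ell2 X \<Longrightarrow> g \<in> ell2 X \<Longrightarrow>
   ell2_inner (S f) g = ell2_inner f (adjoint X S g)"
  using adjoint_eq[OF _ adjop_rel, of X S] adjop_rel[of X S] by (simp add: adjrel_def)



lemma close_mono: "op_close X T S e1 \<Longrightarrow> e1 \<le> e2 \<Longrightarrow> op_close X T S e2"
  unfolding op_close_def
  by (meson mult_right_mono norm_nonneg2 order_trans)

lemma bop_addop: assumes S: "bounded_op X S" and T: "bounded_op X T"
  shows "bounded_op X (\<lambda>f x. S f x + T f x)"
proof -
  obtain C1 where C1: "C1 \<ge> 0" "\<forall>f\<in>ell2 X. ell2_norm (S f) \<le> C1 * ell2_norm f"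
    using bop_bound[OF S] by blast
  obtain C2 where C2: "C2 \<ge> 0" "\<forall>f\<in>ell2 X. ell2_norm (T f) \<le> C2 * ell2_norm f"
    using bop_bound[OF T] by blast
  show ?thesis unfolding bounded_op_def
  proof (intro conjI ballI allI impI)
    fix f assume "f \<notin> ell2 X" thus "(\<lambda>x. S f x + T f x) = (\<lambda>x. 0)"
      using bop_van[OF S] bop_van[OF T] by simp
  next
    fix f assume "f \<in> ell2 X" show "(\<lambda>x. S f x + T f x) \<in> ell2 X"
      by (rule add_ell2[OF bop_ell2[OF S \<open>f \<in> ell2 X\<close>] bop_ell2[OF T \<open>f \<in> ell2 X\<close>]])
  next
    fix f g assume "f \<in> ell2 X" "g \<in> ell2 X"
    thus "(\<lambda>x. S (\<lambda>x. f x + g x) x + T (\<lambda>x. f x + g x) x) =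
        (\<lambda>x. (\<lambda>x. S f x + T f x) x + (\<lambda>x. S g x + T g x) x)"
      using bop_add[OF S] bop_add[OF T] by (simp add: algebra_simps)
  next
    fix c f assume "f \<in> ell2 X"
    thus "(\<lambda>x. S (\<lambda>x. c * f x) x + T (\<lambda>x. c * f x) x) = (\<lambda>x. c * (\<lambda>x. S f x + T f x) x)"
      using bop_scal[OF S] bop_scal[OF T] by (simp add: algebra_simps)
  next
    show "\<exists>C. \<forall>f\<in>ell2 X. ell2_norm (\<lambda>x. S f x + T f x) \<le> C * ell2_norm f"
    proof (intro exI ballI)
      fix f assume f: "f \<in> ell2 X"
      have "ell2_norm (\<lambda>x. S f x + T f x) \<le> ell2_norm (S f) + ell2_norm (T f)"
        by (rule triangle2[OF bop_ell2[OF S f] bop_ell2[OF T f]])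
      also have "\<dots> \<le> C1 * ell2_norm f + C2 * ell2_norm f" using C1 C2 f by (intro add_mono) auto
      finally show "ell2_norm (\<lambda>x. S f x + T f x) \<le> (C1 + C2) * ell2_norm f"
        by (simp add: algebra_simps)
    qed
  qed
qed

lemma bop_scalop: assumes S: "bounded_op X S"
  shows "bounded_op X (\<lambda>f x. c * S f x)"
proof -
  obtain C1 where C1: "C1 \<ge> 0" "\<forall>f\<in>ell2 X. ell2_norm (S f) \<le> C1 * ell2_norm f"
    using bop_bound[OF S] by blast
  show ?thesis unfolding bounded_op_def
  proof (intro conjI ballI allI impI)
    fix f assume "f \<notin> ell2 X" thus "(\<lambda>x. c * S f x) = (\<lambda>x. 0)"
      using bop_van[OF S] by simp
  next
    fix f assume "f \<in> ell2 X" show "(\<lambda>x. c * S f x) \<in> ell2 X"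
      by (rule scal_ell2[OF bop_ell2[OF S \<open>f \<in> ell2 X\<close>]])
  next
    fix f g assume "f \<in> ell2 X" "g \<in> ell2 X"
    thus "(\<lambda>x. c * S (\<lambda>x. f x + g x) x) = (\<lambda>x. (\<lambda>x. c * S f x) x + (\<lambda>x. c * S g x) x)"
      using bop_add[OF S] by (simp add: algebra_simps)
  next
    fix c' f assume "f \<in> ell2 X"
    thus "(\<lambda>x. c * S (\<lambda>x. c' * f x) x) = (\<lambda>x. c' * (\<lambda>x. c * S f x) x)"
      using bop_scal[OF S] by (simp add: algebra_simps)
  next
    show "\<exists>C. \<forall>f\<in>ell2 X. ell2_norm (\<lambda>x. c * S f x) \<le> C * ell2_norm f"
    proof (intro exI ballI)
      fix f assume f: "f \<in> ell2 X"
      have "ell2_norm (\<lambda>x. c * S f x) = cmod c * ell2_norm (S f)" by (rule norm_scal)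
      also have "\<dots> \<le> cmod c * (C1 * ell2_norm f)" using C1 f by (intro mult_left_mono) auto
      finally show "ell2_norm (\<lambda>x. c * S f x) \<le> (cmod c * C1) * ell2_norm f"
        by (simp add: algebra_simps)
    qed
  qed
qed

lemma bop_comp: assumes S: "bounded_op X S" and T: "bounded_op X T"
  shows "bounded_op X (S \<circ> T)"
proof -
  obtain C1 where C1: "C1 \<ge> 0" "\<forall>f\<in>ell2 X. ell2_norm (S f) \<le> C1 * ell2_norm f"
    using bop_bound[OF S] by blast
  obtain C2 where C2: "C2 \<ge> 0" "\<forall>f\<in>ell2 X. ell2_norm (T f) \<le> C2 * ell2_norm f"
    using bop_bound[OF T] by blast
  show ?thesis unfolding bounded_op_def
  proof (intro conjI ballI allI impI)
    fix f assume "f \<notin> ell2 X" thus "(S \<circ> T) f = (\<lambda>x. 0)"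
      using bop_van[OF T] bop_zero[OF S] by simp
  next
    fix f assume "f \<in> ell2 X" thus "(S \<circ> T) f \<in> ell2 X"
      by (simp add: bop_ell2[OF S] bop_ell2[OF T])
  next
    fix f g assume "f \<in> ell2 X" "g \<in> ell2 X"
    thus "(S \<circ> T) (\<lambda>x. f x + g x) = (\<lambda>x. (S \<circ> T) f x + (S \<circ> T) g x)"
      using bop_add[OF S] bop_add[OF T] bop_ell2[OF T] by simp
  next
    fix c f assume "f \<in> ell2 X"
    thus "(S \<circ> T) (\<lambda>x. c * f x) = (\<lambda>x. c * (S \<circ> T) f x)"
      using bop_scal[OF S] bop_scal[OF T] bop_ell2[OF T] by simp
  next
    show "\<exists>C. \<forall>f\<in>ell2 X. ell2_norm ((S \<circ> T) f) \<le> C * ell2_norm f"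
    proof (intro exI ballI)
      fix f assume f: "f \<in> ell2 X"
      have "ell2_norm (S (T f)) \<le> C1 * ell2_norm (T f)" using C1 bop_ell2[OF T f] by blast
      also have "\<dots> \<le> C1 * (C2 * ell2_norm f)" using C1 C2 f by (intro mult_left_mono) auto
      finally show "ell2_norm ((S \<circ> T) f) \<le> (C1 * C2) * ell2_norm f"
        by (simp add: algebra_simps)
    qed
  qed
qed

lemma close_add:
  assumes S: "bounded_op X S" and T: "bounded_op X T" and S': "bounded_op X S'" and T': "bounded_op X T'"
  and c1: "op_close X S S' e1" and c2: "op_close X T T' e2"
  shows "op_close X (\<lambda>f x. S f x + T f x) (\<lambda>f x. S' f x + T' f x) (e1 + e2)"
  unfolding op_close_def
proof
  fix f assume f: "f \<in> ell2 X"
  have a: "(\<lambda>x. S f x - S' f x) \<in> ell2 X" by (rule diff_ell2[OF bop_ell2[OF S f] bop_ell2[OF S' f]])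
  have b: "(\<lambda>x. T f x - T' f x) \<in> ell2 X" by (rule diff_ell2[OF bop_ell2[OF T f] bop_ell2[OF T' f]])
  have "ell2_norm (\<lambda>x. (S f x + T f x) - (S' f x + T' f x)) =
       ell2_norm (\<lambda>x. (S f x - S' f x) + (T f x - T' f x))" by (simp add: algebra_simps)
  also have "\<dots> \<le> ell2_norm (\<lambda>x. S f x - S' f x) + ell2_norm (\<lambda>x. T f x - T' f x)"
    by (rule triangle2[OF a b])
  also have "\<dots> \<le> e1 * ell2_norm f + e2 * ell2_norm f"
    using c1 c2 f unfolding op_close_def by (intro add_mono) auto
  finally show "ell2_norm (\<lambda>x. (S f x + T f x) - (S' f x + T' f x)) \<le> (e1 + e2) * ell2_norm f"
    by (simp add: algebra_simps)
qed

lemma close_scal: "op_close X S S' e \<Longrightarrow> op_close X (\<lambda>f x. c * S f x) (\<lambda>f x. c * S' f x) (cmod c * e)"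
  unfolding op_close_def
proof
  fix f assume c: "\<forall>f\<in>ell2 X. ell2_norm (\<lambda>x. S f x - S' f x) \<le> e * ell2_norm f" and f: "f \<in> ell2 X"
  have "ell2_norm (\<lambda>x. c * S f x - c * S' f x) = ell2_norm (\<lambda>x. c * (S f x - S' f x))"
    by (simp add: algebra_simps)
  also have "\<dots> = cmod c * ell2_norm (\<lambda>x. S f x - S' f x)" by (rule norm_scal)
  also have "\<dots> \<le> cmod c * (e * ell2_norm f)" using c f by (intro mult_left_mono) auto
  finally show "ell2_norm (\<lambda>x. c * S f x - c * S' f x) \<le> cmod c * e * ell2_norm f" by (simp add: mult_ac)
qed

lemma close_comp:
  assumes S: "bounded_op X S" and T: "bounded_op X T" and S': "bounded_op X S'" and T': "bounded_op X T'"
  and CT: "\<forall>f\<in>ell2 X. ell2_norm (T f) \<le> CT * ell2_norm f"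
  and C': "C' \<ge> 0" "\<forall>f\<in>ell2 X. ell2_norm (S' f) \<le> C' * ell2_norm f"
  and e1: "e1 \<ge> 0"
  and c1: "op_close X S S' e1" and c2: "op_close X T T' e2"
  shows "op_close X (S \<circ> T) (S' \<circ> T') (e1 * CT + C' * e2)"
  unfolding op_close_def
proof
  fix f assume f: "f \<in> ell2 X"
  have Tf: "T f \<in> ell2 X" and T'f: "T' f \<in> ell2 X" using bop_ell2[OF T f] bop_ell2[OF T' f] by blast+
  have d: "(\<lambda>x. T f x - T' f x) \<in> ell2 X" by (rule diff_ell2[OF Tf T'f])
  have "ell2_norm (\<lambda>x. S (T f) x - S' (T' f) x) \<le>
      ell2_norm (\<lambda>x. S (T f) x - S' (T f) x) + ell2_norm (\<lambda>x. S' (T f) x - S' (T' f) x)"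
    by (rule triangle_diff[OF bop_ell2[OF S Tf] bop_ell2[OF S' Tf] bop_ell2[OF S' T'f]])
  also have "ell2_norm (\<lambda>x. S' (T f) x - S' (T' f) x) = ell2_norm (S' (\<lambda>x. T f x - T' f x))"
    by (simp add: bop_diff[OF S' Tf T'f])
  also have "\<dots> \<le> C' * ell2_norm (\<lambda>x. T f x - T' f x)" using C' d by blast
  also have "\<dots> \<le> C' * (e2 * ell2_norm f)" using c2 f C' unfolding op_close_def
    by (intro mult_left_mono) auto
  also have "ell2_norm (\<lambda>x. S (T f) x - S' (T f) x) \<le> e1 * ell2_norm (T f)"
    using c1 Tf unfolding op_close_def by blast
  also have "\<dots> \<le> e1 * (CT * ell2_norm f)" using CT f e1 by (intro mult_left_mono) auto
  finally show "ell2_norm (\<lambda>x. (S \<circ> T) f x - (S' \<circ> T') f x) \<le> (e1 * CT + C' * e2) * ell2_norm f"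
    by (simp add: algebra_simps)
qed

lemma closure_mono: "G \<subseteq> H \<Longrightarrow> op_closure X G \<subseteq> op_closure X H"
  unfolding op_closure_def by blast

lemma gen_in_closure: "T \<in> G \<Longrightarrow> bounded_op X T \<Longrightarrow> T \<in> op_closure X G"
  unfolding op_closure_def op_close_def
  by (auto simp: norm_zero2 norm_nonneg2 intro!: bexI[of _ T])

lemma closure_bop: "T \<in> op_closure X G \<Longrightarrow> bounded_op X T"
  unfolding op_closure_def by blast

lemma closure_approx: "T \<in> op_closure X G \<Longrightarrow> e > 0 \<Longrightarrow> \<exists>S\<in>G. op_close X T S e"
  unfolding op_closure_def by blast

lemma closure_add:
  assumes G: "\<And>S. S \<in> G \<Longrightarrow> bounded_op X S"
  and cl: "\<And>S T. S \<in> G \<Longrightarrow> T \<in> G \<Longrightarrow> (\<lambda>f x. S f x + T f x) \<in> G"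
  and S: "S \<in> op_closure X G" and T: "T \<in> op_closure X G"
  shows "(\<lambda>f x. S f x + T f x) \<in> op_closure X G"
  unfolding op_closure_def
proof (intro CollectI conjI allI impI)
  show "bounded_op X (\<lambda>f x. S f x + T f x)" by (rule bop_addop[OF closure_bop[OF S] closure_bop[OF T]])
  fix e :: real assume e: "e > 0"
  obtain S' where S': "S' \<in> G" "op_close X S S' (e/2)"
    using closure_approx[OF S, of "e/2"] e by auto
  obtain T' where T': "T' \<in> G" "op_close X T T' (e/2)"
    using closure_approx[OF T, of "e/2"] e by auto
  have "op_close X (\<lambda>f x. S f x + T f x) (\<lambda>f x. S' f x + T' f x) (e/2 + e/2)"
    by (rule close_add[OF closure_bop[OF S] closure_bop[OF T] G[OF S'(1)] G[OF T'(1)] S'(2) T'(2)])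
  thus "\<exists>S''\<in>G. op_close X (\<lambda>f x. S f x + T f x) S'' e"
    using cl[OF S'(1) T'(1)] by auto
qed

lemma closure_scal:
  assumes cl: "\<And>S. S \<in> G \<Longrightarrow> (\<lambda>f x. c * S f x) \<in> G"
  and S: "S \<in> op_closure X G"
  shows "(\<lambda>f x. c * S f x) \<in> op_closure X G"
  unfolding op_closure_def
proof (intro CollectI conjI allI impI)
  show "bounded_op X (\<lambda>f x. c * S f x)" by (rule bop_scalop[OF closure_bop[OF S]])
  fix e :: real assume e: "e > 0"
  have e': "e / (cmod c + 1) > 0" using e by (simp add: add_nonneg_pos)
  obtain S' where S': "S' \<in> G" "op_close X S S' (e / (cmod c + 1))"
    using closure_approx[OF S e'] by blast
  have "op_close X (\<lambda>f x. c * S f x) (\<lambda>f x. c * S' f x) (cmod c * (e / (cmod c + 1)))"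
    by (rule close_scal[OF S'(2)])
  moreover have "cmod c * (e / (cmod c + 1)) \<le> e"
  proof -
    have "cmod c / (cmod c + 1) \<le> 1" by (simp add: divide_le_eq_1 add_nonneg_pos)
    hence "e * (cmod c / (cmod c + 1)) \<le> e * 1" using e by (intro mult_left_mono) auto
    moreover have "cmod c * (e / (cmod c + 1)) = e * (cmod c / (cmod c + 1))" by simp
    ultimately show ?thesis by (simp add: mult.commute)
  qed
  ultimately have "op_close X (\<lambda>f x. c * S f x) (\<lambda>f x. c * S' f x) e" by (rule close_mono)
  thus "\<exists>S''\<in>G. op_close X (\<lambda>f x. c * S f x) S'' e" using cl[OF S'(1)] by auto
qed

lemma closure_comp:
  assumes G: "\<And>S. S \<in> G \<Longrightarrow> bounded_op X S" and H: "\<And>S. S \<in> H \<Longrightarrow> bounded_op X S"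
  and cl: "\<And>S T. S \<in> G \<Longrightarrow> T \<in> H \<Longrightarrow> S \<circ> T \<in> G"
  and S: "S \<in> op_closure X G" and T: "T \<in> op_closure X H"
  shows "S \<circ> T \<in> op_closure X G"
  unfolding op_closure_def
proof (intro CollectI conjI allI impI)
  have bS: "bounded_op X S" and bT: "bounded_op X T" using closure_bop[OF S] closure_bop[OF T] by blast+
  show "bounded_op X (S \<circ> T)" by (rule bop_comp[OF bS bT])
  fix e :: real assume e: "e > 0"
  obtain CT where CT: "CT \<ge> 0" "\<forall>f\<in>ell2 X. ell2_norm (T f) \<le> CT * ell2_norm f"
    using bop_bound[OF bT] by blast
  define e1 where "e1 = e / (2 * (CT + 1))"
  have e1: "e1 > 0" using e CT by (simp add: e1_def add_nonneg_pos)
  obtain S' where S': "S' \<in> G" "op_close X S S' e1"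
    using closure_approx[OF S e1] by blast
  obtain C' where C': "C' \<ge> 0" "\<forall>f\<in>ell2 X. ell2_norm (S' f) \<le> C' * ell2_norm f"
    using bop_bound[OF G[OF S'(1)]] by blast
  define e2 where "e2 = e / (2 * (C' + 1))"
  have e2: "e2 > 0" using e C' by (simp add: e2_def add_nonneg_pos)
  obtain T' where T': "T' \<in> H" "op_close X T T' e2"
    using closure_approx[OF T e2] by blast
  have "op_close X (S \<circ> T) (S' \<circ> T') (e1 * CT + C' * e2)"
    by (rule close_comp[OF bS bT G[OF S'(1)] H[OF T'(1)] CT(2) C' _ S'(2) T'(2)]) (use e1 in simp)
  moreover have "e1 * CT + C' * e2 \<le> e"
  proof -
    have "e1 * CT \<le> e / 2" using e CT by (simp add: e1_def field_simps)
    moreover have "C' * e2 \<le> e / 2" using e C' by (simp add: e2_def field_simps)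
    ultimately show ?thesis by simp
  qed
  ultimately have "op_close X (S \<circ> T) (S' \<circ> T') e" by (rule close_mono)
  thus "\<exists>S''\<in>G. op_close X (S \<circ> T) S'' e" using cl[OF S'(1) T'(1)] by auto
qed



lemma bdd_dA: "Metric_space X d \<Longrightarrow> bdd_below ((\<lambda>z. d x z + d y z + 1) ` A)"
  by (rule bdd_belowI2[where m = 0]) (simp add: Metric_space.nonneg add_nonneg_nonneg)

lemma dA_ge:
  assumes ms: "Metric_space X d" and AX: "A \<subseteq> X" and An: "A \<noteq> {}" and x: "x \<in> X" and y: "y \<in> X"
  shows "d y x + 1 \<le> dA d A y x"
  unfolding dA_def
proof (rule cInf_greatest)
  show "(\<lambda>z. d y z + d x z + 1) ` A \<noteq> {}" using An by simp
  fix t assume "t \<in> (\<lambda>z. d y z + d x z + 1) ` A"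
  then obtain z where z: "z \<in> A" "t = d y z + d x z + 1" by blast
  have "d y x \<le> d y z + d z x" using Metric_space.triangle[OF ms y _ x, of z] z AX by auto
  thus "d y x + 1 \<le> t" using z Metric_space.commute[OF ms, of z x] by simp
qed

lemma dA_tri:
  assumes ms: "Metric_space X d" and AX: "A \<subseteq> X" and An: "A \<noteq> {}"
    and x: "x \<in> X" and y: "y \<in> X" and w: "w \<in> X"
  shows "dA d A y x \<le> d y w + dA d A w x"
proof -
  have "dA d A y x - d y w \<le> dA d A w x"
    unfolding dA_def[of d A w x]
  proof (rule cInf_greatest)
    show "(\<lambda>z. d w z + d x z + 1) ` A \<noteq> {}" using An by simp
    fix t assume "t \<in> (\<lambda>z. d w z + d x z + 1) ` A"
    then obtain z where z: "z \<in> A" "t = d w z + d x z + 1" by blast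
    have "dA d A y x \<le> d y z + d x z + 1"
      unfolding dA_def by (rule cInf_lower) (use z bdd_dA[OF ms] in auto)
    also have "d y z \<le> d y w + d w z" using Metric_space.triangle[OF ms y w, of z] z AX by auto
    finally show "dA d A y x - d y w \<le> t" using z by simp
  qed
  thus ?thesis by simp
qed

lemma dA_self:
  assumes ms: "Metric_space X d" and An: "A \<noteq> {}"
  shows "setdist d y A \<le> dA d A y y"
  unfolding dA_def
proof (rule cInf_greatest)
  show "(\<lambda>z. d y z + d y z + 1) ` A \<noteq> {}" using An by simp
  fix t assume "t \<in> (\<lambda>z. d y z + d y z + 1) ` A"
  then obtain z where z: "z \<in> A" "t = d y z + d y z + 1" by blast
  have "setdist d y A \<le> d y z" unfolding setdist_def
    by (rule cInf_lower) (use z in \<open>auto intro: bdd_belowI2[where m = 0] simp: Metric_space.nonneg[OF ms]\<close>)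
  thus "setdist d y A \<le> t" using z Metric_space.nonneg[OF ms, of y z] by simp
qed

lemma fp_add: "finite_prop X D S \<Longrightarrow> finite_prop X D T \<Longrightarrow> finite_prop X D (\<lambda>f x. S f x + T f x)"
  unfolding finite_prop_def
proof -
  assume "\<exists>L. \<forall>x\<in>X. \<forall>y\<in>X. L \<le> D y x \<longrightarrow> S (delta y) x = 0"
     and "\<exists>L. \<forall>x\<in>X. \<forall>y\<in>X. L \<le> D y x \<longrightarrow> T (delta y) x = 0"
  then obtain L1 L2 where L1: "\<forall>x\<in>X. \<forall>y\<in>X. L1 \<le> D y x \<longrightarrow> S (delta y) x = 0"
     and L2: "\<forall>x\<in>X. \<forall>y\<in>X. L2 \<le> D y x \<longrightarrow> T (delta y) x = 0" by blast
  show "\<exists>L. \<forall>x\<in>X. \<forall>y\<in>X. L \<le> D y x \<longrightarrow> S (delta y) x + T (delta y) x = 0"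
    by (rule exI[of _ "max L1 L2"]) (use L1 L2 in auto)
qed

lemma fp_scal: "finite_prop X D S \<Longrightarrow> finite_prop X D (\<lambda>f x. c * S f x)"
  unfolding finite_prop_def by auto

lemma fp_comp:
  assumes ms: "Metric_space X d" and AX: "A \<subseteq> X" and An: "A \<noteq> {}"
  and S: "bounded_op X S" and T: "bounded_op X T"
  and fS: "finite_prop X (dA d A) S" and fT: "finite_prop X d T"
  shows "finite_prop X (dA d A) (S \<circ> T)"
proof -
  obtain L1 where L1: "\<forall>x\<in>X. \<forall>y\<in>X. L1 \<le> dA d A y x \<longrightarrow> S (delta y) x = 0"
    using fS unfolding finite_prop_def by blast
  obtain L2 where L2: "\<forall>x\<in>X. \<forall>y\<in>X. L2 \<le> d y x \<longrightarrow> T (delta y) x = 0"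
    using fT unfolding finite_prop_def by blast
  show ?thesis unfolding finite_prop_def
  proof (intro exI[of _ "L1 + max L2 0"] ballI impI)
    fix x y assume x: "x \<in> X" and y: "y \<in> X" and le: "L1 + max L2 0 \<le> dA d A y x"
    show "(S \<circ> T) (delta y) x = 0" unfolding comp_def
    proof (rule key[OF S bop_ell2[OF T delta_ell2[OF y]]])
      fix w assume w: "w \<in> X" and nz: "T (delta y) w \<noteq> 0"
      have "d y w < L2" using L2 w y nz by force
      moreover have "dA d A y x \<le> d y w + dA d A w x" by (rule dA_tri[OF ms AX An x y w])
      ultimately have "L1 \<le> dA d A w x" using le by linarith
      thus "S (delta w) x = 0" using L1 x w by blast
    qed
  qed
qed



theorem mainTheorem7:
  fixes X :: "'a set" and d :: "'a \<Rightarrow> 'a \<Rightarrow> real" and A :: "'a set"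
  assumes "Metric_space X d"
    and "discrete_metric X d"
    and "countable X"
    and "A \<subseteq> X" and "A \<noteq> {}"
    and "\<forall>k::nat. X - nbhd X d (real k) A \<noteq> {}"
  shows "M_space X d A \<subseteq> uniform_roe X d
    \<and> (\<forall>S\<in>M_space X d A. \<forall>T\<in>M_space X d A. (\<lambda>f x. S f x + T f x) \<in> M_space X d A)
    \<and> (\<forall>c. \<forall>S\<in>M_space X d A. (\<lambda>f x. c * S f x) \<in> M_space X d A)
    \<and> (\<forall>S\<in>M_space X d A. \<forall>T\<in>uniform_roe X d. S \<circ> T \<in> M_space X d A)
    \<and> M_space X d A \<noteq> uniform_roe X d
    \<and> {S \<in> uniform_roe X d. \<forall>T\<in>M_space X d A. adjoint X S \<circ> T = zero_op} = {zero_op}"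
proof -
  note ms = assms(1) and AX = assms(4) and An = assms(5)
  define GM where "GM = {T. bounded_op X T \<and> finite_prop X (dA d A) T}"
  define GR where "GR = {T. bounded_op X T \<and> finite_prop X d T}"
  have Mdef: "M_space X d A = op_closure X GM" by (simp add: M_space_def GM_def)
  have Rdef: "uniform_roe X d = op_closure X GR" by (simp add: uniform_roe_def GR_def)
  have GMb: "\<And>S. S \<in> GM \<Longrightarrow> bounded_op X S" by (simp add: GM_def)
  have GRb: "\<And>S. S \<in> GR \<Longrightarrow> bounded_op X S" by (simp add: GR_def)
  have P1: "M_space X d A \<subseteq> uniform_roe X d"
    unfolding Mdef Rdef
  proof (rule closure_mono, rule subsetI)
    fix T assume "T \<in> GM"
    hence T: "bounded_op X T" "finite_prop X (dA d A) T" by (auto simp: GM_def)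
    obtain L where L: "\<forall>x\<in>X. \<forall>y\<in>X. L \<le> dA d A y x \<longrightarrow> T (delta y) x = 0"
      using T(2) unfolding finite_prop_def by blast
    have "finite_prop X d T" unfolding finite_prop_def
    proof (intro exI[of _ L] ballI impI)
      fix x y assume x: "x \<in> X" and y: "y \<in> X" and le: "L \<le> d y x"
      have "d y x + 1 \<le> dA d A y x" by (rule dA_ge[OF ms AX An x y])
      thus "T (delta y) x = 0" using L x y le by auto
    qed
    thus "T \<in> GR" using T by (simp add: GR_def)
  qed
  have P2: "\<forall>S\<in>M_space X d A. \<forall>T\<in>M_space X d A. (\<lambda>f x. S f x + T f x) \<in> M_space X d A"
    unfolding Mdef
    by (intro ballI closure_add[OF GMb]) (auto simp: GM_def intro: bop_addop fp_add)
  have P3: "\<forall>c. \<forall>S\<in>M_space X d A. (\<lambda>f x. c * S f x) \<in> M_space X d A"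
    unfolding Mdef
    by (intro allI ballI closure_scal) (auto simp: GM_def intro: bop_scalop fp_scal)
  have P4: "\<forall>S\<in>M_space X d A. \<forall>T\<in>uniform_roe X d. S \<circ> T \<in> M_space X d A"
    unfolding Mdef Rdef
    by (intro ballI closure_comp[OF GMb GRb])
       (auto simp: GM_def GR_def intro: bop_comp fp_comp[OF ms AX An])
  have P5: "M_space X d A \<noteq> uniform_roe X d"
  proof
    assume eq: "M_space X d A = uniform_roe X d"
    define I where "I = (\<lambda>f::'a \<Rightarrow> complex. if f \<in> ell2 X then f else (\<lambda>x. 0))"
    have bI: "bounded_op X I" unfolding bounded_op_def
    proof (intro conjI ballI allI impI)
      fix f :: "'a \<Rightarrow> complex" assume "f \<notin> ell2 X" thus "I f = (\<lambda>x. 0)" by (simp add: I_def)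
    next
      fix f :: "'a \<Rightarrow> complex" assume "f \<in> ell2 X" thus "I f \<in> ell2 X" by (simp add: I_def)
    next
      fix f g :: "'a \<Rightarrow> complex" assume "f \<in> ell2 X" "g \<in> ell2 X"
      thus "I (\<lambda>x. f x + g x) = (\<lambda>x. I f x + I g x)" using add_ell2[of f X g] by (simp add: I_def)
    next
      fix c and f :: "'a \<Rightarrow> complex" assume "f \<in> ell2 X"
      thus "I (\<lambda>x. c * f x) = (\<lambda>x. c * I f x)" using scal_ell2[of f X c] by (simp add: I_def)
    next
      show "\<exists>C. \<forall>f\<in>ell2 X. ell2_norm (I f) \<le> C * ell2_norm f"
        by (intro exI[of _ 1]) (simp add: I_def)
    qed
    have "finite_prop X d I" unfolding finite_prop_def
    proof (intro exI[of _ 1] ballI impI)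
      fix x y assume x: "x \<in> X" and y: "y \<in> X" and le: "1 \<le> d y x"
      have "x \<noteq> y" using le Metric_space.zero[OF ms y y] by auto
      thus "I (delta y) x = 0" using delta_ell2[OF y] by (simp add: I_def delta_def)
    qed
    hence "I \<in> uniform_roe X d" unfolding Rdef using bI by (intro gen_in_closure) (auto simp: GR_def)
    hence "I \<in> op_closure X GM" using eq Mdef by simp
    then obtain S' where S': "S' \<in> GM" "op_close X I S' (1/2)"
      using closure_approx[of I X GM "1/2"] by auto
    have bS': "bounded_op X S'" using S' by (simp add: GM_def)
    obtain L where L: "\<forall>x\<in>X. \<forall>y\<in>X. L \<le> dA d A y x \<longrightarrow> S' (delta y) x = 0"
      using S' unfolding GM_def finite_prop_def by blast
    obtain k :: nat where k: "L \<le> real k" using real_arch_simple by blast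
    obtain y where y: "y \<in> X" "y \<notin> nbhd X d (real k) A" using assms(6) by blast
    have "real k < setdist d y A" using y by (simp add: nbhd_def)
    also have "\<dots> \<le> dA d A y y" by (rule dA_self[OF ms An])
    finally have "L \<le> dA d A y y" using k by simp
    hence z: "S' (delta y) y = 0" using L y by blast
    have dy: "delta y \<in> ell2 X" by (rule delta_ell2[OF y(1)])
    have h: "(\<lambda>x. I (delta y) x - S' (delta y) x) \<in> ell2 X"
      by (rule diff_ell2[OF bop_ell2[OF bI dy] bop_ell2[OF bS' dy]])
    have "1 = cmod ((\<lambda>x. I (delta y) x - S' (delta y) x) y)"
      using z dy by (simp add: I_def delta_def)
    also have "\<dots> \<le> ell2_norm (\<lambda>x. I (delta y) x - S' (delta y) x)" by (rule ptwise[OF h])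
    also have "\<dots> \<le> 1/2 * ell2_norm (delta y)" using S'(2) dy unfolding op_close_def by blast
    finally show False by (simp add: norm_delta)
  qed
  have bz: "bounded_op X (zero_op :: 'a op)" unfolding bounded_op_def zero_op_def
    by (auto simp: zero_ell2 norm_zero2 norm_nonneg2 intro!: exI[of _ 0])
  have zR: "zero_op \<in> uniform_roe X d"
  proof -
    have "finite_prop X d zero_op" unfolding finite_prop_def zero_op_def by simp
    thus ?thesis unfolding Rdef by (intro gen_in_closure[OF _ bz]) (simp add: GR_def bz)
  qed
  have adj0: "adjoint X zero_op = zero_op"
  proof (rule adjoint_eq[OF bz])
    have "bounded_op X (\<lambda>(f::'a \<Rightarrow> complex) (x::'a). 0::complex)" using bz by (simp add: zero_op_def)
    thus "adjrel X zero_op zero_op" by (simp add: adjrel_def zero_op_def ell2_inner_def)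
  qed
  have Z1: "zero_op \<in> {S \<in> uniform_roe X d. \<forall>T\<in>M_space X d A. adjoint X S \<circ> T = zero_op}"
    using zR adj0 by (auto simp: zero_op_def comp_def)
  have Z2: "S = zero_op" if S: "S \<in> uniform_roe X d" and P: "\<forall>T\<in>M_space X d A. adjoint X S \<circ> T = zero_op" for S
  proof -
    have bS: "bounded_op X S" using closure_bop S unfolding Rdef by blast
    have ad: "adjoint X S (delta y) = (\<lambda>x. 0)" if y: "y \<in> X" for y
    proof -
      define E where "E = (\<lambda>f::'a \<Rightarrow> complex. if f \<in> ell2 X then (\<lambda>x. f y * delta y x) else (\<lambda>x. 0))"
      have dy: "delta y \<in> ell2 X" by (rule delta_ell2[OF y])
      have bE: "bounded_op X E" unfolding bounded_op_def
      proof (intro conjI ballI allI impI)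
        fix f :: "'a \<Rightarrow> complex" assume "f \<notin> ell2 X" thus "E f = (\<lambda>x. 0)" by (simp add: E_def)
      next
        fix f :: "'a \<Rightarrow> complex" assume "f \<in> ell2 X" thus "E f \<in> ell2 X"
          using scal_ell2[OF dy] by (simp add: E_def)
      next
        fix f g :: "'a \<Rightarrow> complex" assume "f \<in> ell2 X" "g \<in> ell2 X"
        thus "E (\<lambda>x. f x + g x) = (\<lambda>x. E f x + E g x)" using add_ell2[of f X g]
          by (simp add: E_def algebra_simps)
      next
        fix c and f :: "'a \<Rightarrow> complex" assume "f \<in> ell2 X"
        thus "E (\<lambda>x. c * f x) = (\<lambda>x. c * E f x)" using scal_ell2[of f X c] by (simp add: E_def mult.assoc)
      next
        show "\<exists>C. \<forall>f\<in>ell2 X. ell2_norm (E f) \<le> C * ell2_norm f"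
        proof (intro exI[of _ 1] ballI)
          fix f :: "'a \<Rightarrow> complex" assume f: "f \<in> ell2 X"
          have "ell2_norm (E f) = cmod (f y)" using f by (simp add: E_def norm_scal norm_delta)
          also have "\<dots> \<le> ell2_norm f" by (rule ptwise[OF f])
          finally show "ell2_norm (E f) \<le> 1 * ell2_norm f" by simp
        qed
      qed
      have "finite_prop X (dA d A) E" unfolding finite_prop_def
      proof (intro exI[of _ "dA d A y y + 1"] ballI impI)
        fix x' y' assume x': "x' \<in> X" and y': "y' \<in> X" and le: "dA d A y y + 1 \<le> dA d A y' x'"
        show "E (delta y') x' = 0"
          using delta_ell2[OF y'] le by (auto simp: E_def delta_def)
      qed
      hence "E \<in> M_space X d A" unfolding Mdef using bE by (intro gen_in_closure) (auto simp: GM_def)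
      hence "(adjoint X S \<circ> E) (delta y) = zero_op (delta y)" using P by simp
      moreover have "E (delta y) = delta y" using dy by (simp add: E_def delta_def)
      ultimately show ?thesis by (simp add: zero_op_def)
    qed
    show ?thesis
    proof (rule ext)
      fix f show "S f = zero_op f"
      proof (cases "f \<in> ell2 X")
        case False thus ?thesis using bop_van[OF bS] by (simp add: zero_op_def)
      next
        case f: True
        show ?thesis
        proof (rule ext)
          fix y show "S f y = zero_op f y"
          proof (cases "y \<in> X")
            case y: True
            have "cnj (S f y) = ell2_inner (S f) (delta y)" by (simp add: inner_delta_right)
            also have "\<dots> = ell2_inner f (adjoint X S (delta y))"
              by (rule adjoint_prop[OF bS f delta_ell2[OF y]])
            also have "\<dots> = 0" using ad[OF y] by (simp add: ell2_inner_def)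
            finally show ?thesis by (simp add: zero_op_def)
          next
            case False
            thus ?thesis using ell2_van[OF bop_ell2[OF bS f]] by (simp add: zero_op_def)
          qed
        qed
      qed
    qed
  qed
  have P6: "{S \<in> uniform_roe X d. \<forall>T\<in>M_space X d A. adjoint X S \<circ> T = zero_op} = {zero_op}"
    using Z1 Z2 by blast
  show ?thesis using P1 P2 P3 P4 P5 P6 by blast
qed

end
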